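(* For $n\in\{2,3,\ldots\}$ let $X_n$ be the minimal clade size in the Bolthausen-Sznitman $n$-coalescent. Then for every $k\in\mathbb{N}$, $$\frac{\log n}{n^k}E(X_n^k)\to\frac1k\quad\text{as } n\to\infty.$$
   Context: The Bolthausen-Sznitman $n$-coalescent $(\Pi^{(n)}_t)_{t\ge0}$ is the continuous-time Markov process on partitions of $[n]=\{1,\ldots,n\}$, started from singletons, whose only transitions are mergers of several blocks into one: when there are $b$ blocks, each given $k$-tuple of blocks ($2\le k\le b$) merges at rate $\frac{(k-2)!(b-k)!}{(b-1)!}$. For a partition $\eta$ let $C_i(\eta)$ be the block containing $i$. Let $I$ be uniform on $[n]$ independent of the coalescent, $E_n=\inf\{t\ge0:C_I(\Pi^{(n)}_t)\ne\{I\}\}$, and the minimal clade size $X_n=|C_I(\Pi^{(n)}_{E_n})|$. *)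

theory Defs
  imports Complex_Main
begin

text \<open>Bolthausen-Sznitman coalescent, described through its embedded jump chain.
A state is a partition of [n], represented as a set of blocks (nat set set).
With b blocks, each given set S of k blocks (2 <= k <= b) merges at rate
(k-2)!(b-k)!/(b-1)!.\<close>

definition bs_rate :: "nat \<Rightarrow> nat \<Rightarrow> real" where
  "bs_rate b k = fact (k - 2) * fact (b - k) / fact (b - 1)"

definition mergers :: "nat set set \<Rightarrow> nat set set set" where
  "mergers P = {S. S \<subseteq> P \<and> 2 \<le> card S}"

definition total_rate :: "nat set set \<Rightarrow> real" where
  "total_rate P = (\<Sum>S\<in>mergers P. bs_rate (card P) (card S))"

definition merge :: "nat set set \<Rightarrow> nat set set \<Rightarrow> nat set set" where
  "merge P S = insert (\<Union>S) (P - S)"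

definition jump_prob :: "nat set set \<Rightarrow> nat set set \<Rightarrow> real" where
  "jump_prob P S = bs_rate (card P) (card S) / total_rate P"

text \<open>clade_exp g m P i: expectation of g(size of the block containing i at the
first time the singleton block {i} is involved in a merger), for the coalescent
started at partition P (in which {i} is a block), following at most m jumps of
the jump chain (m jumps always suffice when m is at least the number of blocks).\<close>
fun clade_exp :: "(nat \<Rightarrow> real) \<Rightarrow> nat \<Rightarrow> nat set set \<Rightarrow> nat \<Rightarrow> real" where
  "clade_exp g 0 P i = 0"
| "clade_exp g (Suc m) P i =
     (\<Sum>S\<in>mergers P. jump_prob P S *
        (if {i} \<in> S then g (card (\<Union>S)) else clade_exp g m (merge P S) i))"

definition singletons :: "nat \<Rightarrow> nat set set" where
  "singletons n = (\<lambda>j. {j}) ` {1..n}"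

text \<open>E(g(X_n)), with I uniform on [n] independent of the coalescent.\<close>
definition min_clade_exp :: "nat \<Rightarrow> (nat \<Rightarrow> real) \<Rightarrow> real" where
  "min_clade_exp n g = (1 / real n) * (\<Sum>i\<in>{1..n}. clade_exp g n (singletons n) i)"

end

theory Submission
  imports Defs "HOL-Analysis.Harmonic_Numbers" "HOL-Real_Asymp.Real_Asymp"
begin


fun aa :: "nat \<Rightarrow> real" where
  "aa t = 1 - (\<Sum>i<t. aa i / real (t + 1 - i))"

declare aa.simps[simp del]

definition cc :: "nat \<Rightarrow> real" where "cc l = 1 / real (l + 1)"

lemma aa_D: "(\<Sum>i\<le>t. aa i * cc (t - i)) = 1"
proof -
  have "(\<Sum>i\<le>t. aa i * cc (t - i)) = (\<Sum>i<t. aa i / real (t + 1 - i)) + aa t"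
    by (simp add: lessThan_Suc_atMost[symmetric] cc_def Suc_diff_le)
  also have "\<dots> = 1" by (subst (2) aa.simps) simp
  finally show ?thesis .
qed

lemma aa0: "aa 0 = 1" by (subst aa.simps) simp
lemma aa1: "aa 1 = 1/2" by (subst aa.simps) (simp add: aa0)

lemma aa_rec: "real (t+1) * aa t = 1 + (\<Sum>u<t. real u * aa u / (real (t-u) * real (t-u+1)))"
proof (cases t)
  case 0 then show ?thesis by (simp add: aa0)
next
  case (Suc s)
  have e1: "(\<Sum>u<t. aa u / real (t+1-u)) = 1 - aa t"
    using aa_D[of t] by (simp add: lessThan_Suc_atMost[symmetric] cc_def Suc_diff_le Suc)
  have e2: "(\<Sum>u<t. aa u / real (t-u)) = 1"
    using aa_D[of s] by (simp add: lessThan_Suc_atMost[symmetric] cc_def Suc_diff_le Suc)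
  have "(\<Sum>u<t. real u * aa u / (real (t-u) * real (t-u+1)))
      = (\<Sum>u<t. real t * (aa u / real (t-u)) - real (t+1) * (aa u / real (t+1-u)))"
  proof (rule sum.cong[OF refl])
    fix u assume "u \<in> {..<t}"
    then have u: "u < t" by simp
    then have a: "real (t-u) > 0" "real (t+1-u) = real (t-u) + 1" "real (t - u + 1) = real (t-u) + 1"
      by auto
    have b: "real t = real (t-u) + real u" using u by simp
    show "real u * aa u / (real (t-u) * real (t-u+1)) = real t * (aa u / real (t-u)) - real (t+1) * (aa u / real (t+1-u))"
      unfolding a(2,3) b using a(1) by (simp add: field_simps)
  qed
  also have "\<dots> = real t * (\<Sum>u<t. aa u / real (t-u)) - real (t+1) * (\<Sum>u<t. aa u / real (t+1-u))"
    by (simp only: sum_subtractf sum_distrib_left)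
  also have "\<dots> = real t * 1 - real (t+1) * (1 - aa t)"
    by (simp only: e1 e2)
  finally show ?thesis by (simp add: algebra_simps)
qed

lemma aa_pos: "aa t \<ge> 1 / real (t+1)"
proof (induction t rule: less_induct)
  case (less t)
  have "(\<Sum>u<t. real u * aa u / (real (t-u) * real (t-u+1))) \<ge> 0"
  proof (rule sum_nonneg)
    fix u assume "u \<in> {..<t}"
    then have "aa u \<ge> 1 / real (u+1)" using less by simp
    then have "aa u \<ge> 0" by (smt (verit) divide_nonneg_nonneg of_nat_0_le_iff)
    then show "real u * aa u / (real (t-u) * real (t-u+1)) \<ge> 0" by simp
  qed
  then have "real (t+1) * aa t \<ge> 1" using aa_rec[of t] by simp
  then show ?case by (simp add: field_simps)
qed

lemma aa_nonneg: "aa t \<ge> 0"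
  using aa_pos[of t] by (smt (verit) divide_nonneg_nonneg of_nat_0_le_iff)

definition bb :: "nat \<Rightarrow> real" where "bb k = (if k = 0 then 1 else aa k - aa (k-1))"

lemma bb_cc: "(\<Sum>k\<le>Suc m. bb k * cc (Suc m - k)) = 0"
proof -
  have "(\<Sum>k\<le>Suc m. bb k * cc (Suc m - k)) = cc (Suc m) + (\<Sum>k\<le>m. (aa (Suc k) - aa k) * cc (m - k))"
    unfolding sum.atMost_Suc_shift by (simp add: bb_def)
  also have "\<dots> = cc (Suc m) + (\<Sum>k\<le>m. aa (Suc k) * cc (m - k)) - (\<Sum>k\<le>m. aa k * cc (m - k))"
    by (simp add: algebra_simps sum_subtractf)
  also have "cc (Suc m) + (\<Sum>k\<le>m. aa (Suc k) * cc (m - k)) = (\<Sum>k\<le>Suc m. aa k * cc (Suc m - k))"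
    unfolding sum.atMost_Suc_shift by (simp add: aa0)
  finally show ?thesis by (simp add: aa_D)
qed

lemma bb_nonpos: "1 \<le> k \<Longrightarrow> k \<le> n \<Longrightarrow> bb k \<le> 0"
proof (induction n arbitrary: k)
  case 0 then show ?case by simp
next
  case (Suc n)
  show ?case
  proof (cases "k \<le> n")
    case True then show ?thesis using Suc by simp
  next
    case False
    then have k: "k = Suc n" using Suc by simp
    show ?thesis
    proof (cases n)
      case 0 then show ?thesis using k by (simp add: bb_def aa0 aa1[unfolded One_nat_def])
    next
      case (Suc m)
      define \<rho> where "\<rho> = cc (Suc n) / cc n"
      have E1: "(\<Sum>k\<le>n. bb k * cc (n - k)) = 0" using bb_cc[of m] Suc by simp
      have E2: "bb (Suc n) + (\<Sum>k\<le>n. bb k * cc (Suc n - k)) = 0"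
        using bb_cc[of n] by (simp add: cc_def)
      have "bb (Suc n) = \<rho> * (\<Sum>k\<le>n. bb k * cc (n - k)) - (\<Sum>k\<le>n. bb k * cc (Suc n - k))"
        using E1 E2 by simp
      also have "\<dots> = (\<Sum>k\<le>n. bb k * (\<rho> * cc (n - k) - cc (Suc n - k)))"
        by (simp add: sum_distrib_left sum_subtractf algebra_simps)
      also have "\<dots> \<le> 0"
      proof (rule sum_nonpos)
        fix j assume j: "j \<in> {..n}"
        show "bb j * (\<rho> * cc (n - j) - cc (Suc n - j)) \<le> 0"
        proof (cases "j = 0")
          case True then show ?thesis by (simp add: \<rho>_def cc_def field_simps)
        next
          case False
          then have "bb j \<le> 0" using Suc.IH[of j] j by simp
          moreover have "\<rho> * cc (n - j) - cc (Suc n - j) \<ge> 0"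
          proof -
            have jn: "j \<le> n" using j by simp
            have "real (Suc n - j) = real (n - j) + 1" using jn by (simp add: Suc_diff_le)
            then have "cc (Suc n - j) = 1 / (real (n-j) + 2)" by (simp add: cc_def)
            moreover have "\<rho> * cc (n - j) = (real n + 1) / ((real n + 2) * (real (n-j) + 1))"
              by (simp add: \<rho>_def cc_def field_simps)
            moreover have "(real n + 1) / ((real n + 2) * (real (n-j) + 1)) \<ge> 1 / (real (n-j) + 2)"
            proof -
              have "\<And>x::real. 0 \<le> x \<Longrightarrow> x \<le> real n \<Longrightarrow> 1 / (x + 2) \<le> (real n + 1) / ((real n + 2) * (x + 1))"
              proof -
                fix x :: real assume x: "0 \<le> x" "x \<le> real n"
                have "(real n + 2) * (x + 1) \<le> (real n + 1) * (x + 2)" using x by (simp add: algebra_simps)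
                then show "1 / (x + 2) \<le> (real n + 1) / ((real n + 2) * (x + 1))"
                  using x by (simp add: divide_simps)
              qed
              then show ?thesis by simp
            qed
            ultimately show ?thesis by simp
          qed
          ultimately show ?thesis by (simp add: mult_nonpos_nonneg)
        qed
      qed
      finally show ?thesis using k by simp
    qed
  qed
qed

lemma aa_Suc_le: "aa (Suc t) \<le> aa t"
  using bb_nonpos[of "Suc t" "Suc t"] by (simp add: bb_def)

lemma aa_antimono: "i \<le> j \<Longrightarrow> aa j \<le> aa i"
  by (induction j rule: dec_induct) (auto intro: order_trans[OF aa_Suc_le])

lemma aa_le1: "aa t \<le> 1" using aa_antimono[of 0 t] by (simp add: aa0)


lemma cc_nonneg: "cc l \<ge> 0" by (simp add: cc_def)

lemma sum_cc_harm: "(\<Sum>i\<le>t. cc (t - i)) = harm (Suc t)"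
proof (induction t)
  case 0 then show ?case by (simp add: cc_def harm_def)
next
  case (Suc t)
  have "(\<Sum>i\<le>Suc t. cc (Suc t - i)) = cc (Suc t) + (\<Sum>i\<le>t. cc (t - i))"
    unfolding sum.atMost_Suc_shift by simp
  also have "\<dots> = cc (Suc t) + harm (Suc t)" by (simp only: Suc.IH)
  also have "\<dots> = harm (Suc (Suc t))" by (simp add: harm_Suc[of "Suc t"] cc_def inverse_eq_divide)
  finally show ?case .
qed

lemma sum_cc_harm2: assumes "K \<le> m" shows "(\<Sum>i\<in>{K..m}. cc (m - i)) = harm (Suc (m - K))"
proof -
  obtain d where d: "m = K + d" using assms le_Suc_ex by blast
  have "(\<Sum>i\<in>{K..m}. cc (m - i)) = (\<Sum>i\<in>{0+K..d+K}. cc (m - i))" using d by (simp add: add.commute)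
  also have "\<dots> = (\<Sum>i\<in>{0..d}. cc (m - (i + K)))" by (rule sum.shift_bounds_cl_nat_ivl)
  also have "\<dots> = (\<Sum>i\<le>d. cc (d - i))" using d by (simp add: atLeast0AtMost)
  finally show ?thesis using sum_cc_harm d by simp
qed

lemma aa_upper: "aa t * harm (Suc t) \<le> 1"
proof -
  have "aa t * harm (Suc t) = (\<Sum>i\<le>t. aa t * cc (t - i))" by (simp add: sum_cc_harm[symmetric] sum_distrib_left)
  also have "\<dots> \<le> (\<Sum>i\<le>t. aa i * cc (t - i))"
    by (rule sum_mono) (auto intro!: mult_right_mono aa_antimono cc_nonneg)
  finally show ?thesis by (simp add: aa_D)
qed

lemma harm_upper: "n > 0 \<Longrightarrow> harm n \<le> 1 + ln (real n)"
  using euler_mascheroni_sequence_decreasing[of 1 n] by (simp add: harm_def)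

lemma aa_upper2: "aa t \<le> 1 / ln (real t + 2)"
proof -
  have h: "harm (Suc t) \<ge> ln (real t + 2)" using harm_ge_ln[of "Suc t"] by (simp add: add.commute)
  have p: "ln (real t + 2) > 0" by simp
  have "aa t * ln (real t + 2) \<le> aa t * harm (Suc t)" using h aa_nonneg by (simp add: mult_left_mono)
  also have "\<dots> \<le> 1" by (rule aa_upper)
  finally show ?thesis using p by (simp add: field_simps)
qed

lemma aa_lower:
  assumes K: "K \<ge> 1" and R: "R \<ge> 2"
  shows "aa K \<ge> (1 - 1 / (real R - 1)) / (1 + ln (real (K * R) + 1))"
proof -
  define m where "m = K * R"
  have Km: "K \<le> m" using K R by (simp add: m_def)
  have "1 = (\<Sum>i\<le>m. aa i * cc (m - i))" by (simp add: aa_D)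
  also have "{..m} = {..<K} \<union> {K..m}" using Km by auto
  also have "(\<Sum>i\<in>{..<K} \<union> {K..m}. aa i * cc (m - i)) = (\<Sum>i<K. aa i * cc (m - i)) + (\<Sum>i\<in>{K..m}. aa i * cc (m - i))"
    by (rule sum.union_disjoint) auto
  also have "(\<Sum>i<K. aa i * cc (m - i)) \<le> (\<Sum>i<K. 1 / (real K * (real R - 1)))"
  proof (rule sum_mono)
    fix i assume "i \<in> {..<K}"
    then have i: "i < K" by simp
    have "real (m - i) + 1 \<ge> real K * (real R - 1)"
    proof -
      have "real (m - i) = real m - real i" using i Km by simp
      moreover have "real m = real K * real R" by (simp add: m_def)
      ultimately show ?thesis using i by (simp add: algebra_simps)
    qed
    moreover have "real K * (real R - 1) > 0" using K R by simp
    ultimately have "cc (m - i) \<le> 1 / (real K * (real R - 1))"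
      unfolding cc_def by (simp add: frac_le)
    moreover have "0 \<le> aa i" "aa i \<le> 1" "0 \<le> cc (m - i)" by (auto simp: aa_nonneg aa_le1 cc_def)
    ultimately show "aa i * cc (m - i) \<le> 1 / (real K * (real R - 1))"
      by (smt (verit) mult_left_le_one_le mult_right_mono)
  qed
  also have "(\<Sum>i<K. 1 / (real K * (real R - 1))) = 1 / (real R - 1)" using K by simp
  also have "(\<Sum>i\<in>{K..m}. aa i * cc (m - i)) \<le> (\<Sum>i\<in>{K..m}. aa K * cc (m - i))"
    by (rule sum_mono) (auto intro!: mult_right_mono aa_antimono cc_nonneg)
  also have "\<dots> = aa K * harm (Suc (m - K))" using Km by (simp add: sum_distrib_left[symmetric] sum_cc_harm2)
  also have "harm (Suc (m - K)) \<le> 1 + ln (real (K * R) + 1)"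
  proof -
    have "harm (Suc (m - K)) \<le> 1 + ln (real (Suc (m - K)))" by (rule harm_upper) simp
    also have "\<dots> \<le> 1 + ln (real (K * R) + 1)"
    proof -
      have "real (Suc (m - K)) \<le> real (K * R) + 1" using Km by (simp add: m_def)
      then show ?thesis by simp
    qed
    finally show ?thesis .
  qed
  finally have "1 \<le> 1 / (real R - 1) + aa K * (1 + ln (real (K * R) + 1))"
    using aa_nonneg[of K] by (smt (verit) mult_left_mono)
  moreover have "1 + ln (real (K * R) + 1) > 0" by (smt (verit) ln_ge_zero of_nat_0_le_iff)
  ultimately show ?thesis by (simp add: field_simps)
qed


lemma aa_ln_lim: "(\<lambda>K. ln (real K) * aa K) \<longlonglongrightarrow> 1"
proof (rule tendsto_sandwich[where f = "\<lambda>K. ln (real K) * (1 - 1 / (ln (real K) + 1)) / (1 + ln (real K * (ln (real K) + 3) + 1))"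
      and h = "\<lambda>K. ln (real K) / ln (real K + 2)"])
  show "(\<lambda>K. ln (real K) * (1 - 1 / (ln (real K) + 1)) / (1 + ln (real K * (ln (real K) + 3) + 1))) \<longlonglongrightarrow> 1"
    by real_asymp
  show "(\<lambda>K. ln (real K) / ln (real K + 2)) \<longlonglongrightarrow> 1"
    by real_asymp
  show "\<forall>\<^sub>F K in sequentially. ln (real K) * aa K \<le> ln (real K) / ln (real K + 2)"
  proof (rule eventually_sequentiallyI[of 1])
    fix K :: nat assume "K \<ge> 1"
    then have "ln (real K) \<ge> 0" by simp
    then show "ln (real K) * aa K \<le> ln (real K) / ln (real K + 2)"
      using aa_upper2[of K] mult_left_mono by fastforce
  qed
  show "\<forall>\<^sub>F K in sequentially. ln (real K) * (1 - 1 / (ln (real K) + 1)) / (1 + ln (real K * (ln (real K) + 3) + 1)) \<le> ln (real K) * aa K"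
  proof (rule eventually_sequentiallyI[of 1])
    fix K :: nat assume K: "K \<ge> 1"
    define L where "L = ln (real K)"
    have L0: "L \<ge> 0" using K by (simp add: L_def)
    define R where "R = nat \<lceil>L\<rceil> + 2"
    have R2: "R \<ge> 2" by (simp add: R_def)
    have Rlo: "real R \<ge> L + 2" using L0 by (simp add: R_def)
    have Rhi: "real R \<le> L + 3" using L0 by (simp add: R_def) linarith
    have A: "aa K \<ge> (1 - 1 / (real R - 1)) / (1 + ln (real (K * R) + 1))" by (rule aa_lower[OF K R2])
    have n1: "1 - 1 / (L + 1) \<le> 1 - 1 / (real R - 1)"
      using Rlo L0 by (simp add: frac_le)
    have n0: "0 \<le> 1 - 1 / (L + 1)" using L0 by (simp add: field_simps)
    have d1: "ln (real (K * R) + 1) \<le> ln (real K * (L + 3) + 1)"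
    proof -
      have "real (K * R) + 1 \<le> real K * (L + 3) + 1" using Rhi by (simp add: mult_left_mono)
      moreover have "0 < real (K * R) + 1" by (simp add: add_pos_nonneg del: of_nat_mult)
      ultimately show ?thesis using ln_mono by blast
    qed
    have d0: "0 < 1 + ln (real (K * R) + 1)" by (smt (verit) ln_ge_zero of_nat_0_le_iff)
    have "(1 - 1 / (L + 1)) / (1 + ln (real K * (L + 3) + 1)) \<le> (1 - 1 / (real R - 1)) / (1 + ln (real (K * R) + 1))"
      using n1 n0 d1 d0 by (intro frac_le) auto
    then have Xle: "(1 - 1 / (L + 1)) / (1 + ln (real K * (L + 3) + 1)) \<le> aa K" using A by linarith
    have "L * ((1 - 1 / (L + 1)) / (1 + ln (real K * (L + 3) + 1))) \<le> L * aa K"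
      by (rule mult_left_mono[OF Xle L0])
    then show "ln (real K) * (1 - 1 / (ln (real K) + 1)) / (1 + ln (real K * (ln (real K) + 3) + 1)) \<le> ln (real K) * aa K"
      by (simp add: L_def)
  qed
qed


lemma pow_step1: "(x::real) \<ge> 0 \<Longrightarrow> x ^ Suc q + real (Suc q) * x ^ q \<le> (x + 1) ^ Suc q"
proof (induction q)
  case 0 then show ?case by simp
next
  case (Suc q)
  have "(x + 1) ^ Suc (Suc q) = (x + 1) * (x + 1) ^ Suc q" by simp
  also have "\<dots> \<ge> (x + 1) * (x ^ Suc q + real (Suc q) * x ^ q)"
    using Suc by (intro mult_left_mono) auto
  finally have "(x + 1) ^ Suc (Suc q) \<ge> x ^ Suc (Suc q) + real (Suc q) * x ^ Suc q + x ^ Suc q + real (Suc q) * x ^ q"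
    by (simp add: algebra_simps)
  moreover have "real (Suc q) * x ^ q \<ge> 0" using Suc by simp
  ultimately show ?case by (simp add: algebra_simps)
qed

lemma pow_step2: "(y::real) \<ge> 0 \<Longrightarrow> (y + 1) ^ Suc q \<le> y ^ Suc q + real (Suc q) * (y + 1) ^ q"
proof (induction q)
  case 0 then show ?case by simp
next
  case (Suc q)
  have "(y + 1) ^ Suc (Suc q) = (y + 1) * (y + 1) ^ Suc q" by simp
  also have "\<dots> \<le> (y + 1) * (y ^ Suc q + real (Suc q) * (y + 1) ^ q)"
    using Suc by (intro mult_left_mono) auto
  also have "\<dots> = y ^ Suc (Suc q) + y ^ Suc q + real (Suc q) * (y + 1) ^ Suc q"
    by (simp add: algebra_simps)
  also have "y ^ Suc q \<le> (y + 1) ^ Suc q" using Suc by (intro power_mono) auto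
  finally show ?case by (simp add: algebra_simps)
qed

lemma TS_lo: "real (Suc q) * (\<Sum>j\<in>{1..<n}. (1 + real j) ^ q) \<ge> real n ^ Suc q - 1"
proof (induction n)
  case 0 then show ?case by simp
next
  case (Suc n)
  show ?case
  proof (cases "n = 0")
    case True then show ?thesis by simp
  next
    case False
    then have "(\<Sum>j\<in>{1..<Suc n}. (1 + real j) ^ q) = (\<Sum>j\<in>{1..<n}. (1 + real j) ^ q) + (1 + real n) ^ q"
      by (simp add: sum.atLeastLessThan_Suc)
    moreover have "(real n + 1) ^ Suc q \<le> real n ^ Suc q + real (Suc q) * (real n + 1) ^ q"
      by (rule pow_step2) simp
    ultimately show ?thesis using Suc by (simp add: algebra_simps)
  qed
qed

lemma TS_hi: "real (Suc q) * (\<Sum>j\<in>{1..<n}. (1 + real j) ^ q) \<le> (real n + 1) ^ Suc q"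
proof (induction n)
  case 0 then show ?case by simp
next
  case (Suc n)
  show ?case
  proof (cases "n = 0")
    case True then show ?thesis by simp
  next
    case False
    then have "(\<Sum>j\<in>{1..<Suc n}. (1 + real j) ^ q) = (\<Sum>j\<in>{1..<n}. (1 + real j) ^ q) + (1 + real n) ^ q"
      by (simp add: sum.atLeastLessThan_Suc)
    moreover have "(real n + 1) ^ Suc q + real (Suc q) * (real n + 1) ^ q \<le> (real n + 1 + 1) ^ Suc q"
      by (rule pow_step1) simp
    ultimately show ?thesis using Suc by (simp add: algebra_simps)
  qed
qed

definition FF :: "nat \<Rightarrow> nat \<Rightarrow> real" where
  "FF k n = (\<Sum>j\<in>{1..<n}. (1 + real j) ^ k / real j)"

lemma FF_nonneg: "FF k n \<ge> 0" unfolding FF_def by (rule sum_nonneg) simp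

lemma FF_lo: "FF (Suc q) n \<ge> (real n ^ Suc q - 1) / real (Suc q)"
proof -
  have "FF (Suc q) n \<ge> (\<Sum>j\<in>{1..<n}. (1 + real j) ^ q)"
    unfolding FF_def
  proof (rule sum_mono)
    fix j assume "j \<in> {1..<n}"
    then have j: "j \<ge> 1" by simp
    have "(1 + real j) ^ Suc q / real j = (1 + real j) ^ q * ((1 + real j) / real j)" by simp
    moreover have "(1 + real j) / real j \<ge> 1" using j by simp
    moreover have "(1 + real j) ^ q \<ge> 0" by simp
    ultimately have "(1 + real j) ^ q * 1 \<le> (1 + real j) ^ Suc q / real j"
      by (metis mult_left_mono)
    then show "(1 + real j) ^ q \<le> (1 + real j) ^ Suc q / real j" by simp
  qed
  moreover have "(\<Sum>j\<in>{1..<n}. (1 + real j) ^ q) \<ge> (real n ^ Suc q - 1) / real (Suc q)"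
    using TS_lo[where q=q and n=n] by (simp add: field_simps)
  ultimately show ?thesis by linarith
qed

lemma FF_hi: assumes "n \<ge> 1"
  shows "FF (Suc q) n \<le> (real n + 1) ^ Suc q / real (Suc q) + real n ^ q * (1 + ln (real n))"
proof -
  have "FF (Suc q) n = (\<Sum>j\<in>{1..<n}. (1 + real j) ^ q + (1 + real j) ^ q / real j)"
    unfolding FF_def
  proof (rule sum.cong[OF refl])
    fix j assume "j \<in> {1..<n}"
    then have j: "j \<ge> 1" by simp
    show "(1 + real j) ^ Suc q / real j = (1 + real j) ^ q + (1 + real j) ^ q / real j"
      using j by (simp add: field_simps)
  qed
  also have "\<dots> \<le> (\<Sum>j\<in>{1..<n}. (1 + real j) ^ q + real n ^ q * (1 / real j))"
  proof (rule sum_mono)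
    fix j assume "j \<in> {1..<n}"
    then have j: "j \<ge> 1" "j < n" by auto
    have "(1 + real j) ^ q \<le> real n ^ q" using j by (intro power_mono) auto
    then have "(1 + real j) ^ q / real j \<le> real n ^ q / real j" using j by (simp add: divide_right_mono)
    then show "(1 + real j) ^ q + (1 + real j) ^ q / real j \<le> (1 + real j) ^ q + real n ^ q * (1 / real j)" by simp
  qed
  also have "\<dots> = (\<Sum>j\<in>{1..<n}. (1 + real j) ^ q) + real n ^ q * (\<Sum>j\<in>{1..<n}. 1 / real j)"
    by (simp add: sum.distrib sum_distrib_left)
  also have "(\<Sum>j\<in>{1..<n}. 1 / real j) \<le> 1 + ln (real n)"
  proof -
    have "(\<Sum>j\<in>{1..<n}. 1 / real j) \<le> (\<Sum>j\<in>{1..n}. 1 / real j)"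
      by (rule sum_mono2) auto
    also have "\<dots> = harm n" by (simp add: harm_def inverse_eq_divide)
    also have "\<dots> \<le> 1 + ln (real n)" using assms by (intro harm_upper) simp
    finally show ?thesis .
  qed
  also have "(\<Sum>j\<in>{1..<n}. (1 + real j) ^ q) \<le> (real n + 1) ^ Suc q / real (Suc q)"
    using TS_hi[where q=q and n=n] by (simp add: field_simps)
  finally show ?thesis by (simp add: mult_left_mono)
qed


lemma FF_lim: "(\<lambda>n. FF (Suc q) n / real n ^ Suc q) \<longlonglongrightarrow> 1 / real (Suc q)"
proof (rule tendsto_sandwich[where f = "\<lambda>n. (1 - (1 / real n) ^ Suc q) / real (Suc q)"
      and h = "\<lambda>n. (1 + 1 / real n) ^ Suc q / real (Suc q) + (1 + ln (real n)) / real n"])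
  have l1: "(\<lambda>n. 1 / real n) \<longlonglongrightarrow> 0" by real_asymp
  have "(\<lambda>n. (1 - (1 / real n) ^ Suc q) / real (Suc q)) \<longlonglongrightarrow> (1 - 0 ^ Suc q) / real (Suc q)"
    by (intro tendsto_intros l1) simp
  then show "(\<lambda>n. (1 - (1 / real n) ^ Suc q) / real (Suc q)) \<longlonglongrightarrow> 1 / real (Suc q)" by simp
  have l2: "(\<lambda>n. (1 + ln (real n)) / real n) \<longlonglongrightarrow> 0" by real_asymp
  have "(\<lambda>n. (1 + 1 / real n) ^ Suc q / real (Suc q) + (1 + ln (real n)) / real n) \<longlonglongrightarrow> (1 + 0) ^ Suc q / real (Suc q) + 0"
    by (intro tendsto_intros l1 l2) simp
  then show "(\<lambda>n. (1 + 1 / real n) ^ Suc q / real (Suc q) + (1 + ln (real n)) / real n) \<longlonglongrightarrow> 1 / real (Suc q)" by simp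
  show "\<forall>\<^sub>F n in sequentially. (1 - (1 / real n) ^ Suc q) / real (Suc q) \<le> FF (Suc q) n / real n ^ Suc q"
  proof (rule eventually_sequentiallyI[of 1])
    fix n :: nat assume n: "n \<ge> 1"
    have p: "real n ^ Suc q > 0" using n by simp
    have "(1 - (1 / real n) ^ Suc q) / real (Suc q) = ((real n ^ Suc q - 1) / real (Suc q)) / real n ^ Suc q"
    proof -
      have g: "\<And>x::real. x > 0 \<Longrightarrow> (1 - 1 / x) / real (Suc q) = ((x - 1) / real (Suc q)) / x"
        by (simp add: field_simps)
      show ?thesis using g[OF p] by (simp add: power_one_over)
    qed
    also have "\<dots> \<le> FF (Suc q) n / real n ^ Suc q" by (rule divide_right_mono[OF FF_lo[where q=q and n=n]]) simp
    finally show "(1 - (1 / real n) ^ Suc q) / real (Suc q) \<le> FF (Suc q) n / real n ^ Suc q" .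
  qed
  show "\<forall>\<^sub>F n in sequentially. FF (Suc q) n / real n ^ Suc q \<le> (1 + 1 / real n) ^ Suc q / real (Suc q) + (1 + ln (real n)) / real n"
  proof (rule eventually_sequentiallyI[of 1])
    fix n :: nat assume n: "n \<ge> 1"
    have p: "real n ^ Suc q > 0" using n by simp
    have "FF (Suc q) n / real n ^ Suc q \<le> ((real n + 1) ^ Suc q / real (Suc q) + real n ^ q * (1 + ln (real n))) / real n ^ Suc q"
      by (rule divide_right_mono[OF FF_hi[OF n, where q=q]]) simp
    also have "\<dots> = (1 + 1 / real n) ^ Suc q / real (Suc q) + (1 + ln (real n)) / real n"
    proof -
      have e: "1 + 1 / real n = (real n + 1) / real n" using n by (simp add: field_simps)
      have "(real n + 1) ^ Suc q / real n ^ Suc q = (1 + 1 / real n) ^ Suc q"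
        by (simp only: e power_divide)
      moreover have "real n ^ q * (1 + ln (real n)) / real n ^ Suc q = (1 + ln (real n)) / real n"
      proof -
        have g: "\<And>a x m :: real. a \<noteq> 0 \<Longrightarrow> m \<noteq> 0 \<Longrightarrow> a * x / (m * a) = x / m" by simp
        have "real n ^ Suc q = real n * real n ^ q" by simp
        then show ?thesis using g[of "real n ^ q" "real n" "1 + ln (real n)"] n by simp
      qed
      moreover have "\<And>A B N c :: real. (A / c + B) / N = (A / N) / c + B / N"
        by (simp add: add_divide_distrib divide_divide_eq_left mult.commute)
      ultimately show ?thesis by metis
    qed
    finally show "FF (Suc q) n / real n ^ Suc q \<le> (1 + 1 / real n) ^ Suc q / real (Suc q) + (1 + ln (real n)) / real n" .
  qed
qed


definition TT :: "nat \<Rightarrow> nat \<Rightarrow> real" where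
  "TT k n = (\<Sum>j\<in>{1..<n}. aa (n - 1 - j) * ((1 + real j) ^ k / real j))"

lemma TT_lo: "TT k n \<ge> aa n * FF k n"
  unfolding TT_def FF_def sum_distrib_left
proof (rule sum_mono)
  fix j assume "j \<in> {1..<n}"
  have "aa n \<le> aa (n - 1 - j)" by (rule aa_antimono) simp
  moreover have "(1 + real j) ^ k / real j \<ge> 0" by simp
  ultimately show "aa n * ((1 + real j) ^ k / real j) \<le> aa (n - 1 - j) * ((1 + real j) ^ k / real j)"
    by (rule mult_right_mono)
qed

lemma f_bound: "1 \<le> j \<Longrightarrow> j < n \<Longrightarrow> (1 + real j) ^ Suc q / real j \<le> 2 ^ Suc q * real n ^ q"
proof -
  assume j: "1 \<le> j" "j < n"
  have "(1 + real j) ^ Suc q \<le> (2 * real j) ^ Suc q" using j by (intro power_mono) auto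
  then have "(1 + real j) ^ Suc q / real j \<le> (2 * real j) ^ Suc q / real j"
    by (rule divide_right_mono) simp
  also have "\<dots> = 2 ^ Suc q * real j ^ q"
  proof -
    have e: "(2 * real j) ^ Suc q = 2 ^ Suc q * real j ^ q * real j"
      by (simp only: power_mult_distrib power_Suc mult_ac)
    have g: "\<And>x c :: real. x \<noteq> 0 \<Longrightarrow> c * x / x = c" by simp
    show ?thesis unfolding e using g j by simp
  qed
  also have "\<dots> \<le> 2 ^ Suc q * real n ^ q" using j by (intro mult_left_mono power_mono) auto
  finally show ?thesis .
qed


lemma TT_hi:
  assumes n: "n \<ge> 1"
  shows "TT (Suc q) n \<le> real N * (2 ^ Suc q * real n ^ q) + aa N * FF (Suc q) n"
proof -
  define c where "c = 2 ^ Suc q * real n ^ q"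
  have "TT (Suc q) n \<le> (\<Sum>j\<in>{1..<n}. (if n - 1 - j < N then c else 0) + aa N * ((1 + real j) ^ Suc q / real j))"
    unfolding TT_def
  proof (rule sum_mono)
    fix j assume "j \<in> {1..<n}"
    then have j: "1 \<le> j" "j < n" by auto
    have f0: "(1 + real j) ^ Suc q / real j \<ge> 0" by simp
    show "aa (n - 1 - j) * ((1 + real j) ^ Suc q / real j) \<le> (if n - 1 - j < N then c else 0) + aa N * ((1 + real j) ^ Suc q / real j)"
    proof (cases "n - 1 - j < N")
      case True
      have "aa (n - 1 - j) * ((1 + real j) ^ Suc q / real j) \<le> 1 * ((1 + real j) ^ Suc q / real j)"
        using f0 aa_le1 by (intro mult_right_mono) auto
      also have "\<dots> \<le> c" using f_bound[OF j] by (simp add: c_def)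
      finally have i1: "aa (n - 1 - j) * ((1 + real j) ^ Suc q / real j) \<le> c" .
      have i2: "0 \<le> aa N * ((1 + real j) ^ Suc q / real j)" using f0 aa_nonneg[of N] by simp
      have i3: "(if n - 1 - j < N then c else 0) = c" using True by simp
      show ?thesis unfolding i3 using i1 i2 by linarith
    next
      case False
      then have "aa (n - 1 - j) \<le> aa N" by (intro aa_antimono) simp
      then have "aa (n - 1 - j) * ((1 + real j) ^ Suc q / real j) \<le> aa N * ((1 + real j) ^ Suc q / real j)"
        using f0 by (rule mult_right_mono)
      moreover have "(if n - 1 - j < N then c else 0) = 0" using False by simp
      ultimately show ?thesis by linarith
    qed
  qed
  also have "\<dots> = real (card {j\<in>{1..<n}. n - 1 - j < N}) * c + aa N * FF (Suc q) n"
    by (simp add: sum.distrib sum_distrib_left FF_def sum.If_cases Int_def)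
  also have "card {j\<in>{1..<n}. n - 1 - j < N} \<le> N"
  proof -
    have "{j\<in>{1..<n}. n - 1 - j < N} \<subseteq> {n - N..<n}" by auto
    then have "card {j\<in>{1..<n}. n - 1 - j < N} \<le> card {n - N..<n}" by (intro card_mono) auto
    then show ?thesis by simp
  qed
  then have "real (card {j\<in>{1..<n}. n - 1 - j < N}) * c \<le> real N * c"
    by (intro mult_right_mono) (auto simp: c_def)
  finally show ?thesis by (simp add: c_def)
qed


lemma main_lim:
  "(\<lambda>n. ln (real n) / real n ^ Suc q * TT (Suc q) n) \<longlonglongrightarrow> 1 / real (Suc q)"
proof (rule tendsto_sandwich[where f = "\<lambda>n. (ln (real n) * aa n) * (FF (Suc q) n / real n ^ Suc q)"
      and h = "\<lambda>n. 2 ^ Suc q / ln (real n) + ln (real n) / ln (real n / ln (real n) ^ 2) * (FF (Suc q) n / real n ^ Suc q)"])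
  show "(\<lambda>n. (ln (real n) * aa n) * (FF (Suc q) n / real n ^ Suc q)) \<longlonglongrightarrow> 1 / real (Suc q)"
    using tendsto_mult[OF aa_ln_lim FF_lim[of q]] by simp
  have l1: "(\<lambda>n. 2 ^ Suc q / ln (real n)) \<longlonglongrightarrow> 0"
  proof -
    have "(\<lambda>n. 1 / ln (real n)) \<longlonglongrightarrow> 0" by real_asymp
    from tendsto_mult_left[OF this, of "2 ^ Suc q"] show ?thesis by simp
  qed
  have l2: "(\<lambda>n. ln (real n) / ln (real n / ln (real n) ^ 2)) \<longlonglongrightarrow> 1" by real_asymp
  show "(\<lambda>n. 2 ^ Suc q / ln (real n) + ln (real n) / ln (real n / ln (real n) ^ 2) * (FF (Suc q) n / real n ^ Suc q)) \<longlonglongrightarrow> 1 / real (Suc q)"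
    using tendsto_add[OF l1 tendsto_mult[OF l2 FF_lim[of q]]] by simp
  show "\<forall>\<^sub>F n in sequentially. (ln (real n) * aa n) * (FF (Suc q) n / real n ^ Suc q) \<le> ln (real n) / real n ^ Suc q * TT (Suc q) n"
  proof (rule eventually_sequentiallyI[of 1])
    fix n :: nat assume n: "n \<ge> 1"
    have "ln (real n) / real n ^ Suc q * (aa n * FF (Suc q) n) \<le> ln (real n) / real n ^ Suc q * TT (Suc q) n"
      using n TT_lo by (intro mult_left_mono) auto
    then show "(ln (real n) * aa n) * (FF (Suc q) n / real n ^ Suc q) \<le> ln (real n) / real n ^ Suc q * TT (Suc q) n"
      by (simp add: field_simps)
  qed
  have ev1: "\<forall>\<^sub>F n in sequentially. real n / ln (real n) ^ 2 > 1" by real_asymp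
  have ev2: "\<forall>\<^sub>F n in sequentially. ln (real n) > 1" by real_asymp
  show "\<forall>\<^sub>F n in sequentially. ln (real n) / real n ^ Suc q * TT (Suc q) n \<le> 2 ^ Suc q / ln (real n) + ln (real n) / ln (real n / ln (real n) ^ 2) * (FF (Suc q) n / real n ^ Suc q)"
    using ev1 ev2 eventually_ge_at_top[of 1]
  proof eventually_elim
    case (elim n)
    define L where "L = ln (real n)"
    have L1: "L > 1" using elim by (simp add: L_def)
    have n: "n \<ge> 1" using elim by simp
    define x where "x = real n / L ^ 2"
    have x1: "x > 1" using elim by (simp add: x_def L_def)
    define N where "N = nat \<lfloor>x\<rfloor>"
    have Nle: "real N \<le> x" using x1 by (simp add: N_def)
    have Nge: "real N + 2 \<ge> x" using x1 by (simp add: N_def) linarith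
    have lnx: "ln x > 0" using x1 by simp
    have lnN: "ln (real N + 2) \<ge> ln x" using Nge x1 by simp
    have aN: "L * aa N \<le> L / ln x"
    proof -
      have "aa N \<le> 1 / ln (real N + 2)" by (rule aa_upper2)
      also have "\<dots> \<le> 1 / ln x" using lnN lnx by (simp add: frac_le)
      finally show ?thesis using L1 by (simp add: mult_left_mono divide_inverse)
    qed
    have np: "real n ^ Suc q > 0" using n by simp
    have "L / real n ^ Suc q * TT (Suc q) n \<le> L / real n ^ Suc q * (real N * (2 ^ Suc q * real n ^ q) + aa N * FF (Suc q) n)"
      using TT_hi[OF n, of q N] L1 np by (intro mult_left_mono) auto
    also have "\<dots> = 2 ^ Suc q * (real N * L / real n) + (L * aa N) * (FF (Suc q) n / real n ^ Suc q)"
      using n by (simp add: field_simps)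
    also have "real N * L / real n \<le> 1 / L"
    proof -
      have "real N * L \<le> x * L" using Nle L1 by (simp add: mult_right_mono)
      also have "x * L = real n / L" using L1 by (simp add: x_def power2_eq_square)
      finally show ?thesis using n L1 by (simp add: field_simps)
    qed
    also have "(L * aa N) * (FF (Suc q) n / real n ^ Suc q) \<le> L / ln x * (FF (Suc q) n / real n ^ Suc q)"
      using aN FF_nonneg np by (intro mult_right_mono) auto
    finally show ?case by (simp add: L_def x_def)
  qed
qed


lemma fact_SS: "(fact (Suc (Suc v)) :: real) = real (Suc (Suc v)) * (real (Suc (Suc v)) - 1) * fact v"
  by (simp add: fact_Suc algebra_simps)

lemma choose_bs:
  assumes "2 \<le> s" "s \<le> b"
  shows "real (b choose s) * bs_rate b s = real b / (real s * (real s - 1))"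
proof -
  define v where "v = s - 2"
  have v: "s = Suc (Suc v)" using assms(1) by (simp add: v_def)
  define u where "u = b - s"
  have u: "b = s + u" using assms(2) by (simp add: u_def)
  have C: "real (b choose s) = fact b / (fact s * fact u)" using u by (simp add: binomial_fact)
  have B: "bs_rate b s = fact v * fact u / fact (b - 1)" using u v by (simp add: bs_rate_def)
  have fb: "(fact b :: real) = real b * fact (b - 1)" using u v by (simp add: fact_reduce)
  have fs: "(fact s :: real) = real s * (real s - 1) * fact v" using v fact_SS by simp
  have s1: "real s - 1 \<noteq> 0" "real s \<noteq> 0" using v by auto
  have gen: "\<And>x F y z A Bb :: real. F \<noteq> 0 \<Longrightarrow> A \<noteq> 0 \<Longrightarrow> Bb \<noteq> 0 \<Longrightarrow> y \<noteq> 0 \<Longrightarrow> z \<noteq> 0 \<Longrightarrow>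
      (x * F) / ((y * z * A) * Bb) * (A * Bb / F) = x / (y * z)"
    by (simp add: field_simps)
  show ?thesis unfolding C B fb fs by (rule gen) (use s1 in auto)
qed

lemma tele0: "(\<Sum>s\<in>{2..Suc m}. 1 / (real s * (real s - 1))) = 1 - 1 / real (Suc m)"
proof (induction m)
  case 0 then show ?case by simp
next
  case (Suc m)
  have "{2..Suc (Suc m)} = insert (Suc (Suc m)) {2..Suc m}" by auto
  then have "(\<Sum>s\<in>{2..Suc (Suc m)}. 1 / (real s * (real s - 1))) = 1 / (real (Suc (Suc m)) * (real (Suc (Suc m)) - 1)) + (\<Sum>s\<in>{2..Suc m}. 1 / (real s * (real s - 1)))"
    by simp
  also have "\<dots> = 1 / (real (Suc (Suc m)) * (real (Suc (Suc m)) - 1)) + (1 - 1 / real (Suc m))"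
    by (simp only: Suc.IH)
  also have "\<dots> = 1 - 1 / real (Suc (Suc m))"
  proof -
    have g: "\<And>x::real. x \<ge> 0 \<Longrightarrow> 1 / ((x + 2) * (x + 2 - 1)) + (1 - 1 / (x + 1)) = 1 - 1 / (x + 2)"
    proof -
      fix x :: real assume x: "x \<ge> 0"
      then have p: "x + 1 \<noteq> 0" "x + 2 \<noteq> 0" by auto
      have e: "x + 2 - 1 = x + 1" by simp
      have "1 / (x + 1) - 1 / (x + 2) = ((x + 2) - (x + 1)) / ((x + 1) * (x + 2))"
        using p by (simp add: diff_frac_eq)
      then have "1 / ((x + 2) * (x + 2 - 1)) = 1 / (x + 1) - 1 / (x + 2)" unfolding e by (simp add: mult.commute)
      then show "1 / ((x + 2) * (x + 2 - 1)) + (1 - 1 / (x + 1)) = 1 - 1 / (x + 2)" by simp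
    qed
    have "real (Suc (Suc m)) = real m + 2" "real (Suc m) = real m + 1" by auto
    then show ?thesis using g[of "real m"] by (simp add: add.commute)
  qed
  finally show ?case .
qed

lemma tele: "1 \<le> b \<Longrightarrow> (\<Sum>s\<in>{2..b}. 1 / (real s * (real s - 1))) = 1 - 1 / real b"
  using tele0[of "b - 1"] by simp

definition KK :: "nat \<Rightarrow> nat \<Rightarrow> real" where
  "KK r j = fact (j - 1) * fact (r - j) / (fact r * real r)"

definition ww :: "nat \<Rightarrow> nat \<Rightarrow> real" where
  "ww r j = aa (r - j) * fact (j - 1) * fact (r - j) / fact r"

lemma T0: "1 \<le> j \<Longrightarrow> j \<le> r \<Longrightarrow> bs_rate (Suc r) (Suc j) / real r = KK r j"
  by (simp add: bs_rate_def KK_def)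

lemma Tw: "ww r j = KK r j * (real r * aa (r - j))" if "1 \<le> j" "j \<le> r"
  using that by (simp add: ww_def KK_def field_simps)

lemma T1:
  assumes "2 \<le> s" "s \<le> j" "j \<le> r"
  shows "real (j choose s) * (bs_rate (Suc r) s / real r * ww (r - s + 1) (j - s + 1))
       = KK r j * (real j * aa (r - j)) / (real s * (real s - 1))"
proof -
  define v where "v = s - 2"
  have v: "s = Suc (Suc v)" using assms(1) by (simp add: v_def)
  define u where "u = j - s"
  have u: "j = s + u" using assms(2) by (simp add: u_def)
  define t where "t = r - j"
  have t: "r = j + t" using assms(3) by (simp add: t_def)
  have C: "real (j choose s) = fact j / (fact s * fact u)" using u by (simp add: binomial_fact)
  have B: "bs_rate (Suc r) s = fact v * fact (Suc (u + t)) / fact r"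
    using u v t by (simp add: bs_rate_def)
  have W: "ww (r - s + 1) (j - s + 1) = aa t * fact u * fact t / fact (Suc (u + t))"
    using u v t by (simp add: ww_def)
  have K: "KK r j = fact (j - 1) * fact t / (fact r * real r)" using t by (simp add: KK_def)
  have fj: "(fact j :: real) = real j * fact (j - 1)" using u v by (simp add: fact_reduce)
  have fs: "(fact s :: real) = real s * (real s - 1) * fact v" using v fact_SS by simp
  have rt: "r - j = t" using t by simp
  have nz: "real s - 1 \<noteq> 0" "real s \<noteq> 0" "real r \<noteq> 0" using v t u by auto
  have gen: "\<And>j F1 s1 s2 fv fu G Fr r a ft :: real. s1 \<noteq> 0 \<Longrightarrow> s2 \<noteq> 0 \<Longrightarrow> fv \<noteq> 0 \<Longrightarrow> fu \<noteq> 0 \<Longrightarrow> G \<noteq> 0 \<Longrightarrow> Fr \<noteq> 0 \<Longrightarrow> r \<noteq> 0 \<Longrightarrow>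
     (j * F1) / ((s1 * s2 * fv) * fu) * (fv * G / Fr / r * (a * fu * ft / G)) = F1 * ft / (Fr * r) * (j * a) / (s1 * s2)"
    by (simp add: field_simps)
  show ?thesis unfolding C B W K fj fs rt by (rule gen) (use nz in auto)
qed

lemma T2:
  assumes "1 \<le> j" "2 \<le> s" "s \<le> r - j" "j \<le> r"
  shows "real ((r - j) choose s) * (bs_rate (Suc r) s / real r * ww (r - s + 1) j)
       = KK r j * (aa (r - j - s + 1) * real (r - j - s + 1)) / (real s * (real s - 1))"
proof -
  define v where "v = s - 2"
  have v: "s = Suc (Suc v)" using assms(2) by (simp add: v_def)
  define w where "w = r - j - s"
  have w: "r - j = s + w" using assms(3) by (simp add: w_def)
  define i where "i = j - 1"
  have i: "j = Suc i" using assms(1) by (simp add: i_def)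
  have r: "r = Suc i + s + w" using w i assms(4) by simp
  have C: "real ((r - j) choose s) = fact (r - j) / (fact s * fact w)" using w by (simp add: binomial_fact)
  have B: "bs_rate (Suc r) s = fact v * fact (Suc (Suc i + w)) / fact r"
    using r v by (simp add: bs_rate_def)
  have W: "ww (r - s + 1) j = aa (Suc w) * fact i * (real (Suc w) * fact w) / fact (Suc (Suc i + w))"
    using r v i by (simp add: ww_def fact_Suc)
  have K: "KK r j = fact i * fact (r - j) / (fact r * real r)" using i by (simp add: KK_def)
  have e: "r - j - s + 1 = Suc w" using w by simp
  have fs: "(fact s :: real) = real s * (real s - 1) * fact v" using v fact_SS by simp
  have nz: "real s - 1 \<noteq> 0" "real s \<noteq> 0" "real r \<noteq> 0" using v r by auto
  have gen: "\<And>H s1 s2 fv fw G Fr r a fi w1 :: real. s1 \<noteq> 0 \<Longrightarrow> s2 \<noteq> 0 \<Longrightarrow> fv \<noteq> 0 \<Longrightarrow> fw \<noteq> 0 \<Longrightarrow> G \<noteq> 0 \<Longrightarrow> Fr \<noteq> 0 \<Longrightarrow> r \<noteq> 0 \<Longrightarrow>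
     H / ((s1 * s2 * fv) * fw) * (fv * G / Fr / r * (a * fi * (w1 * fw) / G)) = fi * H / (Fr * r) * (a * w1) / (s1 * s2)"
    by (simp add: field_simps)
  show ?thesis unfolding C B W K e fs by (rule gen) (use nz in auto)
qed


lemma Rsum: "(\<Sum>s\<in>{2..t}. aa (t - s + 1) * real (t - s + 1) / (real s * (real s - 1))) = real (t + 1) * aa t - 1"
proof -
  have "(\<Sum>s\<in>{2..t}. aa (t - s + 1) * real (t - s + 1) / (real s * (real s - 1)))
      = (\<Sum>u\<in>{1..<t}. real u * aa u / (real (t-u) * real (t-u+1)))"
  proof (rule sum.reindex_bij_witness[where i = "\<lambda>u. t + 1 - u" and j = "\<lambda>s. t + 1 - s"])
    fix s assume s: "s \<in> {2..t}"
    then have "real (s - 1) = real s - 1" "t - (t + 1 - s) = s - 1" "t + 1 - s = t - s + 1" by auto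
    moreover have "t - (t + 1 - s) + 1 = s" using s by auto
    ultimately show "real (t + 1 - s) * aa (t + 1 - s) / (real (t - (t + 1 - s)) * real (t - (t + 1 - s) + 1))
        = aa (t - s + 1) * real (t - s + 1) / (real s * (real s - 1))"
      by (simp add: field_simps)
  qed auto
  also have "\<dots> = (\<Sum>u<t. real u * aa u / (real (t-u) * real (t-u+1)))"
  proof -
    have "{..<t} = insert 0 {1..<t}" if "t > 0" using that by auto
    then show ?thesis by (cases "t = 0") auto
  qed
  also have "\<dots> = real (t + 1) * aa t - 1" using aa_rec[of t] by simp
  finally show ?thesis .
qed

lemma NUM:
  assumes j: "1 \<le> j" "j \<le> r"
  shows "bs_rate (Suc r) (Suc j) / real r
      + (\<Sum>s\<in>{2..j}. real (j choose s) * (bs_rate (Suc r) s / real r * ww (r - s + 1) (j - s + 1)))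
      + (\<Sum>s\<in>{2..r - j}. real ((r - j) choose s) * (bs_rate (Suc r) s / real r * ww (r - s + 1) j))
      = ww r j"
proof -
  define t where "t = r - j"
  have s1: "(\<Sum>s\<in>{2..j}. real (j choose s) * (bs_rate (Suc r) s / real r * ww (r - s + 1) (j - s + 1)))
      = KK r j * (real j * aa t) * (\<Sum>s\<in>{2..j}. 1 / (real s * (real s - 1)))"
    unfolding sum_distrib_left
  proof (rule sum.cong[OF refl])
    fix s assume "s \<in> {2..j}"
    then have s: "2 \<le> s" "s \<le> j" by auto
    have "real (j choose s) * (bs_rate (Suc r) s / real r * ww (r - s + 1) (j - s + 1))
       = KK r j * (real j * aa (r - j)) / (real s * (real s - 1))" by (rule T1[OF s j(2)])
    then show "real (j choose s) * (bs_rate (Suc r) s / real r * ww (r - s + 1) (j - s + 1))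
       = KK r j * (real j * aa t) * (1 / (real s * (real s - 1)))" by (simp add: t_def)
  qed
  have s2: "(\<Sum>s\<in>{2..r - j}. real ((r - j) choose s) * (bs_rate (Suc r) s / real r * ww (r - s + 1) j))
      = KK r j * (\<Sum>s\<in>{2..t}. aa (t - s + 1) * real (t - s + 1) / (real s * (real s - 1)))"
    unfolding sum_distrib_left t_def
  proof (rule sum.cong[OF refl])
    fix s assume "s \<in> {2..r - j}"
    then have s: "2 \<le> s" "s \<le> r - j" by auto
    show "real ((r - j) choose s) * (bs_rate (Suc r) s / real r * ww (r - s + 1) j)
       = KK r j * (aa (r - j - s + 1) * real (r - j - s + 1) / (real s * (real s - 1)))"
      using T2[OF j(1) s j(2)] by simp
  qed
  have "bs_rate (Suc r) (Suc j) / real r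
      + (\<Sum>s\<in>{2..j}. real (j choose s) * (bs_rate (Suc r) s / real r * ww (r - s + 1) (j - s + 1)))
      + (\<Sum>s\<in>{2..r - j}. real ((r - j) choose s) * (bs_rate (Suc r) s / real r * ww (r - s + 1) j))
      = KK r j + KK r j * (real j * aa t) * (1 - 1 / real j) + KK r j * (real (t + 1) * aa t - 1)"
    unfolding s1 s2 T0[OF j] tele[OF j(1)] Rsum by simp
  also have "\<dots> = KK r j * (real r * aa t)"
    using j by (simp add: t_def field_simps of_nat_diff)
  also have "\<dots> = ww r j" using Tw[OF j] by (simp add: t_def)
  finally show ?thesis .
qed


definition good :: "nat set set \<Rightarrow> bool" where
  "good P \<longleftrightarrow> finite P \<and> (\<forall>B\<in>P. finite B \<and> B \<noteq> {}) \<and> (\<forall>B\<in>P. \<forall>C\<in>P. B \<noteq> C \<longrightarrow> B \<inter> C = {})"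

definition sig :: "nat set set \<Rightarrow> nat" where "sig J = (\<Sum>B\<in>J. card B)"

lemma card_Union_good: assumes G: "good P" and S: "S \<subseteq> P" shows "card (\<Union>S) = sig S"
  unfolding sig_def
proof (rule card_Union_disjoint)
  show "pairwise disjnt S"
  proof (rule pairwiseI)
    fix x y assume "x \<in> S" "y \<in> S" "x \<noteq> y"
    then show "disjnt x y" using G S unfolding good_def disjnt_def by blast
  qed
  show "\<And>A. A \<in> S \<Longrightarrow> finite A" using G S unfolding good_def by blast
qed

lemma group_card:
  assumes "finite A"
  shows "(\<Sum>S\<in>{S. S \<subseteq> A \<and> Q (card S)}. h (card S)) = (\<Sum>s\<in>{s. s \<le> card A \<and> Q s}. real (card A choose s) * h s)"
proof -
  let ?X = "{S. S \<subseteq> A \<and> Q (card S)}"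
  let ?T = "{s. s \<le> card A \<and> Q s}"
  have fX: "finite ?X" using assms by (rule rev_finite_subset[OF finite_Pow_iff[THEN iffD2]]) auto
  have fT: "finite ?T" by simp
  have im: "card ` ?X \<subseteq> ?T" using assms by (auto intro: card_mono)
  have "(\<Sum>S\<in>?X. h (card S)) = (\<Sum>s\<in>?T. \<Sum>S\<in>{S. S \<in> ?X \<and> card S = s}. h (card S))"
    by (rule sum.group[OF fX fT im, symmetric])
  also have "\<dots> = (\<Sum>s\<in>?T. real (card A choose s) * h s)"
  proof (rule sum.cong[OF refl])
    fix s assume s: "s \<in> ?T"
    have "{S. S \<in> ?X \<and> card S = s} = {S. S \<subseteq> A \<and> card S = s}" using s by auto
    then have "(\<Sum>S\<in>{S. S \<in> ?X \<and> card S = s}. h (card S)) = (\<Sum>S\<in>{S. S \<subseteq> A \<and> card S = s}. h s)"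
      by simp
    also have "\<dots> = real (card A choose s) * h s" using n_subsets[OF assms, of s] by simp
    finally show "(\<Sum>S\<in>{S. S \<in> ?X \<and> card S = s}. h (card S)) = real (card A choose s) * h s" .
  qed
  finally show ?thesis .
qed

lemma set_2_le: "{s. s \<le> b \<and> 2 \<le> s} = {2..b}" by auto

lemma total_rate_eq:
  assumes "finite P" "card P \<ge> 1"
  shows "total_rate P = real (card P) - 1"
proof -
  have "total_rate P = (\<Sum>S\<in>{S. S \<subseteq> P \<and> 2 \<le> card S}. bs_rate (card P) (card S))"
    by (simp add: total_rate_def mergers_def)
  also have "\<dots> = (\<Sum>s\<in>{2..card P}. real (card P choose s) * bs_rate (card P) s)"
    using group_card[OF assms(1), where Q="\<lambda>s. 2 \<le> s" and h="bs_rate (card P)"] by (simp add: set_2_le)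
  also have "\<dots> = (\<Sum>s\<in>{2..card P}. real (card P) * (1 / (real s * (real s - 1))))"
    by (rule sum.cong[OF refl]) (simp add: choose_bs)
  also have "\<dots> = real (card P) * (1 - 1 / real (card P))"
    by (simp only: sum_distrib_left[symmetric] tele[OF assms(2)])
  also have "\<dots> = real (card P) - 1" using assms(2) by (simp add: field_simps)
  finally show ?thesis .
qed

lemma split_sum:
  assumes fOb: "finite Ob" and J: "J \<subseteq> Ob"
  shows "(\<Sum>S\<in>{S. S \<subseteq> Ob \<and> 2 \<le> card S}. (if S \<subseteq> J then X (card S) else if S \<inter> J = {} then Y (card S) else 0))
    = (\<Sum>s\<in>{2..card J}. real (card J choose s) * X s) + (\<Sum>s\<in>{2..card Ob - card J}. real ((card Ob - card J) choose s) * Y s)"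
proof -
  let ?A = "{S. S \<subseteq> Ob \<and> 2 \<le> card S}"
  have fA: "finite ?A" using fOb by (rule rev_finite_subset[OF finite_Pow_iff[THEN iffD2]]) auto
  have "(\<Sum>S\<in>?A. (if S \<subseteq> J then X (card S) else if S \<inter> J = {} then Y (card S) else 0))
      = (\<Sum>S\<in>?A. (if S \<subseteq> J then X (card S) else 0) + (if S \<inter> J = {} then Y (card S) else 0))"
  proof (rule sum.cong[OF refl])
    fix S assume "S \<in> ?A"
    then have "S \<noteq> {}" by auto
    then have "\<not> (S \<subseteq> J \<and> S \<inter> J = {})" by auto
    then show "(if S \<subseteq> J then X (card S) else if S \<inter> J = {} then Y (card S) else 0)
      = (if S \<subseteq> J then X (card S) else 0) + (if S \<inter> J = {} then Y (card S) else 0)" by auto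
  qed
  also have "\<dots> = (\<Sum>S\<in>{S\<in>?A. S \<subseteq> J}. X (card S)) + (\<Sum>S\<in>{S\<in>?A. S \<inter> J = {}}. Y (card S))"
  proof -
    have a: "(\<Sum>S\<in>?A. if S \<subseteq> J then X (card S) else 0) = (\<Sum>S\<in>{S\<in>?A. S \<subseteq> J}. X (card S))"
      by (rule sum.inter_filter[OF fA, symmetric])
    have b: "(\<Sum>S\<in>?A. if S \<inter> J = {} then Y (card S) else 0) = (\<Sum>S\<in>{S\<in>?A. S \<inter> J = {}}. Y (card S))"
      by (rule sum.inter_filter[OF fA, symmetric])
    show ?thesis by (simp only: sum.distrib a b)
  qed
  also have "{S\<in>?A. S \<subseteq> J} = {S. S \<subseteq> J \<and> 2 \<le> card S}" using J by auto
  also have "{S\<in>?A. S \<inter> J = {}} = {S. S \<subseteq> Ob - J \<and> 2 \<le> card S}" by auto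
  also have "(\<Sum>S\<in>{S. S \<subseteq> J \<and> 2 \<le> card S}. X (card S)) = (\<Sum>s\<in>{2..card J}. real (card J choose s) * X s)"
    using group_card[OF finite_subset[OF J fOb], where Q="\<lambda>s. 2 \<le> s" and h=X] by (simp add: set_2_le)
  also have "(\<Sum>S\<in>{S. S \<subseteq> Ob - J \<and> 2 \<le> card S}. Y (card S)) = (\<Sum>s\<in>{2..card Ob - card J}. real ((card Ob - card J) choose s) * Y s)"
    using group_card[where A="Ob - J" and Q="\<lambda>s. 2 \<le> s" and h=Y] fOb J by (simp add: set_2_le card_Diff_subset finite_subset)
  finally show ?thesis .
qed


lemma two_elems: assumes "2 \<le> card S" obtains B1 B2 where "B1 \<in> S" "B2 \<in> S" "B1 \<noteq> B2"
proof -
  have f: "finite S" using assms card.infinite by fastforce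
  have "\<not> (\<forall>a1\<in>S. \<forall>a2\<in>S. a1 = a2)"
  proof
    assume "\<forall>a1\<in>S. \<forall>a2\<in>S. a1 = a2"
    then have "card S \<le> Suc 0" using card_le_Suc0_iff_eq[OF f] by blast
    then show False using assms by simp
  qed
  then show ?thesis using that by blast
qed

locale mrg_ctx =
  fixes P :: "nat set set" and i :: nat and S :: "nat set set"
  assumes G: "good P" and iP: "{i} \<in> P" and SO: "S \<subseteq> P - {{i}}" and cS: "2 \<le> card S"
begin

lemma fP: "finite P" using G by (simp add: good_def)
lemma fS: "finite S" using SO fP finite_subset by blast
lemma Sne: "S \<noteq> {}" using cS by auto

lemma U_notin: "\<Union>S \<notin> P"
proof
  assume U: "\<Union>S \<in> P"
  obtain B1 B2 where B: "B1 \<in> S" "B2 \<in> S" "B1 \<noteq> B2" using two_elems[OF cS] by blast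
  have BP: "B1 \<in> P" "B2 \<in> P" using B SO by auto
  have ne: "B1 \<noteq> {}" "B2 \<noteq> {}" using BP G by (auto simp: good_def)
  have dis: "B1 \<inter> B2 = {}" using BP B(3) G by (auto simp: good_def)
  show False
  proof (cases "\<Union>S = B1")
    case True
    then have "B2 \<subseteq> B1" using B by auto
    then show False using dis ne by auto
  next
    case False
    then have "\<Union>S \<inter> B1 = {}" using U BP G by (auto simp: good_def)
    moreover have "B1 \<subseteq> \<Union>S" using B by auto
    ultimately show False using ne by auto
  qed
qed

lemma merge_eq: "merge P S = insert (\<Union>S) (P - S)" by (simp add: merge_def)

lemma merge_i: "{i} \<in> merge P S"
  using iP SO by (auto simp: merge_def)

lemma merge_O: "merge P S - {{i}} = insert (\<Union>S) ((P - {{i}}) - S)"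
  using U_notin iP by (auto simp: merge_def)

lemma merge_card: "card (merge P S) = card P - card S + 1"
proof -
  have "card (merge P S) = Suc (card (P - S))"
    unfolding merge_def using U_notin fP by (subst card_insert_disjoint) auto
  also have "card (P - S) = card P - card S" using SO fS by (intro card_Diff_subset) auto
  finally show ?thesis by simp
qed

lemma merge_good: "good (merge P S)"
proof -
  have f: "finite (insert (\<Union>S) (P - S))" using fP by simp
  have ne: "\<forall>B\<in>insert (\<Union>S) (P - S). finite B \<and> B \<noteq> {}"
  proof
    fix B assume "B \<in> insert (\<Union>S) (P - S)"
    then show "finite B \<and> B \<noteq> {}"
    proof
      assume "B = \<Union>S"
      moreover have "\<forall>C\<in>S. finite C" using SO G by (auto simp: good_def)
      moreover obtain B1 where "B1 \<in> S" "B1 \<noteq> {}" using Sne SO G by (auto simp: good_def)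
      ultimately show ?thesis using fS by auto
    next
      assume "B \<in> P - S" then show ?thesis using G by (auto simp: good_def)
    qed
  qed
  have dis: "\<And>X Y. X \<in> P \<Longrightarrow> Y \<in> P \<Longrightarrow> X \<noteq> Y \<Longrightarrow> X \<inter> Y = {}" using G by (auto simp: good_def)
  have d1: "\<And>X. X \<in> P - S \<Longrightarrow> X \<inter> \<Union>S = {}"
  proof -
    fix X assume X: "X \<in> P - S"
    have "\<And>Y. Y \<in> S \<Longrightarrow> X \<inter> Y = {}" using X SO dis by (metis Diff_iff subsetD)
    then show "X \<inter> \<Union>S = {}" by blast
  qed
  have d: "\<forall>B\<in>insert (\<Union>S) (P - S). \<forall>C\<in>insert (\<Union>S) (P - S). B \<noteq> C \<longrightarrow> B \<inter> C = {}"
  proof (intro ballI impI)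
    fix B C assume B: "B \<in> insert (\<Union>S) (P - S)" and C: "C \<in> insert (\<Union>S) (P - S)" and BC: "B \<noteq> C"
    show "B \<inter> C = {}"
    proof (cases "B = \<Union>S")
      case True
      then have "C \<in> P - S" using C BC by auto
      then show ?thesis using d1 True by blast
    next
      case False
      then have B': "B \<in> P - S" using B by auto
      show ?thesis
      proof (cases "C = \<Union>S")
        case True then show ?thesis using d1[OF B'] by blast
      next
        case False
        then have "C \<in> P - S" using C by auto
        then show ?thesis using B' BC dis by auto
      qed
    qed
  qed
  show ?thesis unfolding good_def merge_def using f ne d by blast
qed

lemma sig_Union: "card (\<Union>S) = sig S"
  using card_Union_good[OF G] SO by auto

end

definition phi :: "nat set set \<Rightarrow> nat set set \<Rightarrow> nat set set" where
  "phi S J = (if S \<subseteq> J then insert (\<Union>S) (J - S) else J)"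
definition psi :: "nat set set \<Rightarrow> nat set set \<Rightarrow> nat set set" where
  "psi S J' = (if \<Union>S \<in> J' then (J' - {\<Union>S}) \<union> S else J')"

context mrg_ctx begin

lemma merge_sum:
  "(\<Sum>J'\<in>{J'. J' \<subseteq> merge P S - {{i}} \<and> J' \<noteq> {}}. ww (card (merge P S) - 1) (card J') * g (1 + sig J'))
   = (\<Sum>J\<in>{J. J \<subseteq> P - {{i}} \<and> J \<noteq> {}}. (if S \<subseteq> J then ww (card P - 1 - card S + 1) (card J - card S + 1) * g (1 + sig J)
        else if S \<inter> J = {} then ww (card P - 1 - card S + 1) (card J) * g (1 + sig J) else 0))"
  (is "?L = ?R")
proof -
  define Ob where "Ob = P - {{i}}"
  define U where "U = \<Union>S"
  define Q where "Q = {J. J \<subseteq> Ob \<and> J \<noteq> {}}"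
  define D where "D = {J\<in>Q. S \<subseteq> J \<or> S \<inter> J = {}}"
  define r' where "r' = card P - 1 - card S + 1"
  define F where "F J = (if S \<subseteq> J then ww r' (card J - card S + 1) * g (1 + sig J) else ww r' (card J) * g (1 + sig J))" for J
  have fOb: "finite Ob" using fP by (simp add: Ob_def)
  have UO: "U \<notin> Ob" using U_notin by (simp add: Ob_def U_def)
  have SO': "S \<subseteq> Ob" using SO by (simp add: Ob_def)
  have fQ: "finite Q" unfolding Q_def using fOb by (rule rev_finite_subset[OF finite_Pow_iff[THEN iffD2]]) auto
  have cSO: "card S \<le> card Ob" using SO' fOb by (rule card_mono[rotated])
  have cO: "card Ob = card P - 1" using iP fP by (simp add: Ob_def)
  have cm: "card (merge P S) - 1 = r'" using merge_card cSO cO cS by (simp add: r'_def)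
  have MO: "merge P S - {{i}} = insert U (Ob - S)" using merge_O by (simp add: Ob_def U_def)
  have R: "?R = (\<Sum>J\<in>D. F J)"
  proof -
    have "?R = (\<Sum>J\<in>Q. if S \<subseteq> J \<or> S \<inter> J = {} then F J else 0)"
      unfolding Q_def Ob_def r'_def F_def by (rule sum.cong[OF refl]) auto
    also have "\<dots> = (\<Sum>J\<in>D. F J)" unfolding D_def by (rule sum.inter_filter[OF fQ, symmetric])
    finally show ?thesis .
  qed
  have sigU: "card U = sig S" using sig_Union by (simp add: U_def)
  have finJ: "\<And>J. J \<subseteq> Ob \<Longrightarrow> finite J" using fOb finite_subset by blast
  have L: "?L = (\<Sum>J'\<in>{J'. J' \<subseteq> insert U (Ob - S) \<and> J' \<noteq> {}}. ww r' (card J') * g (1 + sig J'))"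
    unfolding cm MO ..
  also have "\<dots> = (\<Sum>J\<in>D. F J)"
  proof (rule sum.reindex_bij_witness[where j = "psi S" and i = "phi S"])
    fix J' assume "J' \<in> {J'. J' \<subseteq> insert U (Ob - S) \<and> J' \<noteq> {}}"
    then have J': "J' \<subseteq> insert U (Ob - S)" "J' \<noteq> {}" by auto
    show "phi S (psi S J') = J'"
    proof (cases "U \<in> J'")
      case True
      have "S \<subseteq> (J' - {U}) \<union> S" by auto
      moreover have "(J' - {U}) \<union> S - S = J' - {U}" using J' by auto
      ultimately show ?thesis using True by (auto simp: phi_def psi_def U_def[symmetric])
    next
      case False
      then have "\<not> S \<subseteq> J'" using J' Sne by auto
      then show ?thesis using False by (simp add: phi_def psi_def U_def[symmetric])
    qed
    show "psi S J' \<in> D"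
    proof (cases "U \<in> J'")
      case True
      then show ?thesis using J' SO' Sne by (auto simp: psi_def D_def Q_def U_def[symmetric])
    next
      case False
      then have "J' \<subseteq> Ob - S" using J' by auto
      then show ?thesis using J' False by (auto simp: psi_def D_def Q_def U_def[symmetric])
    qed
    show "F (psi S J') = ww r' (card J') * g (1 + sig J')"
    proof (cases "U \<in> J'")
      case True
      define K where "K = J' - {U}"
      have KO: "K \<subseteq> Ob - S" using J' by (auto simp: K_def)
      have fK: "finite K" using KO finJ by blast
      have ps: "psi S J' = K \<union> S" using True by (simp add: psi_def K_def U_def[symmetric])
      have dKS: "K \<inter> S = {}" using KO by auto
      have cps: "card (K \<union> S) = card K + card S" using fK fS dKS by (rule card_Un_disjoint)
      have J'K: "J' = insert U K" using True by (auto simp: K_def)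
      have UK: "U \<notin> K" by (simp add: K_def)
      have cJ': "card J' = Suc (card K)" using J'K UK fK by simp
      have sps: "sig (K \<union> S) = sig K + sig S" unfolding sig_def using fK fS dKS by (rule sum.union_disjoint)
      have sJ': "sig J' = card U + sig K" unfolding J'K sig_def using UK fK by simp
      show ?thesis unfolding F_def ps cps sps using cJ' sJ' sigU by (simp add: add.commute)
    next
      case False
      then have "J' \<subseteq> Ob - S" using J' by auto
      then have "\<not> S \<subseteq> J'" using Sne by auto
      then show ?thesis using False by (simp add: F_def psi_def U_def[symmetric])
    qed
  next
    fix J assume "J \<in> D"
    then have J: "J \<subseteq> Ob" "J \<noteq> {}" "S \<subseteq> J \<or> S \<inter> J = {}" by (auto simp: D_def Q_def)
    have UJ: "U \<notin> J" using J UO by auto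
    show "psi S (phi S J) = J"
    proof (cases "S \<subseteq> J")
      case True
      have "insert U (J - S) - {U} \<union> S = J" using True UJ by auto
      then show ?thesis using True by (simp add: phi_def psi_def U_def[symmetric])
    next
      case False
      then show ?thesis using UJ by (simp add: phi_def psi_def U_def[symmetric])
    qed
    show "phi S J \<in> {J'. J' \<subseteq> insert U (Ob - S) \<and> J' \<noteq> {}}"
    proof (cases "S \<subseteq> J")
      case True
      then show ?thesis using J by (auto simp: phi_def U_def[symmetric])
    next
      case False
      then have "S \<inter> J = {}" using J by auto
      then show ?thesis using J False by (auto simp: phi_def)
    qed
  qed
  finally show ?thesis using R by simp
qed

end


lemma main_part:
  assumes "good P" "{i} \<in> P" "card P \<le> Suc m"
  shows "clade_exp g m P i = (\<Sum>J\<in>{J. J \<subseteq> P - {{i}} \<and> J \<noteq> {}}. ww (card P - 1) (card J) * g (1 + sig J))"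
  using assms
proof (induction m arbitrary: P)
  case 0
  have fP: "finite P" using 0 by (simp add: good_def)
  have "card (P - {{i}}) = 0" using 0 fP by simp
  then have "P - {{i}} = {}" using fP by simp
  then have e: "{J. J \<subseteq> P - {{i}} \<and> J \<noteq> {}} = {}" by auto
  show ?case unfolding e by simp
next
  case (Suc m)
  note G = Suc.prems(1) and iP = Suc.prems(2) and cP = Suc.prems(3)
  have fP: "finite P" using G by (simp add: good_def)
  define Ob where "Ob = P - {{i}}"
  define r where "r = card Ob"
  define Q where "Q = {J. J \<subseteq> Ob \<and> J \<noteq> {}}"
  define A2 where "A2 = {S. S \<subseteq> Ob \<and> 2 \<le> card S}"
  have fOb: "finite Ob" using fP by (simp add: Ob_def)
  have cP0: "card P > 0" using fP iP card_gt_0_iff by blast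
  have cPr: "card P = Suc r" using fP iP cP0 by (simp add: r_def Ob_def card_Diff_singleton)
  have PO: "P = insert {i} Ob" using iP by (auto simp: Ob_def)
  have iO: "{i} \<notin> Ob" by (simp add: Ob_def)
  have fQ: "finite Q" unfolding Q_def using fOb by (rule rev_finite_subset[OF finite_Pow_iff[THEN iffD2]]) auto
  have fA2: "finite A2" unfolding A2_def using fOb by (rule rev_finite_subset[OF finite_Pow_iff[THEN iffD2]]) auto
  show ?case
  proof (cases "r = 0")
    case True
    then have O0: "Ob = {}" using fOb by (simp add: r_def)
    have "mergers P = {}"
    proof -
      have "\<And>S. S \<subseteq> P \<Longrightarrow> card S \<le> 1"
      proof -
        fix S assume "S \<subseteq> P"
        then have "S \<subseteq> {{i}}" using PO O0 by simp
        then have "card S \<le> card {{i}}" by (intro card_mono) auto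
        then show "card S \<le> 1" by simp
      qed
      then have h: "\<And>S. S \<subseteq> P \<Longrightarrow> card S \<le> 1" .
      have "\<And>S. S \<in> mergers P \<Longrightarrow> False"
      proof -
        fix S assume "S \<in> mergers P"
        then have "S \<subseteq> P" "2 \<le> card S" by (simp_all add: mergers_def)
        then show False using h[of S] by simp
      qed
      then show ?thesis by blast
    qed
    moreover have e2: "{J. J \<subseteq> P - {{i}} \<and> J \<noteq> {}} = {}" using O0 by (auto simp: Ob_def)
    ultimately show ?thesis unfolding e2 by simp
  next
    case False
    then have r1: "r \<ge> 1" by simp
    have tr: "total_rate P = real r" using total_rate_eq[OF fP] cPr by simp
    have jp: "\<And>S. jump_prob P S = bs_rate (Suc r) (card S) / real r" by (simp add: jump_prob_def tr cPr)
    have mer: "mergers P = insert {i} ` Q \<union> A2"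
    proof
      show "mergers P \<subseteq> insert {i} ` Q \<union> A2"
      proof
        fix S assume "S \<in> mergers P"
        then have S: "S \<subseteq> P" "2 \<le> card S" by (auto simp: mergers_def)
        show "S \<in> insert {i} ` Q \<union> A2"
        proof (cases "{i} \<in> S")
          case True
          have "S - {{i}} \<noteq> {}"
          proof
            assume "S - {{i}} = {}"
            then have "S \<subseteq> {{i}}" by auto
            then have "card S \<le> 1" using card_mono[of "{{i}}" S] by simp
            then show False using S by simp
          qed
          moreover have "S - {{i}} \<subseteq> Ob" using S by (auto simp: Ob_def)
          moreover have "S = insert {i} (S - {{i}})" using True by auto
          ultimately show ?thesis unfolding Q_def by blast
        next
          case False
          then have "S \<subseteq> Ob" using S by (auto simp: Ob_def)
          then show ?thesis using S by (simp add: A2_def)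
        qed
      qed
    next
      show "insert {i} ` Q \<union> A2 \<subseteq> mergers P"
      proof
        fix S assume "S \<in> insert {i} ` Q \<union> A2"
        then show "S \<in> mergers P"
        proof
          assume "S \<in> insert {i} ` Q"
          then obtain J where J: "J \<subseteq> Ob" "J \<noteq> {}" "S = insert {i} J" by (auto simp: Q_def)
          have fJ: "finite J" using J fOb finite_subset by blast
          have "card J \<ge> 1" using fJ J by (simp add: Suc_leI card_gt_0_iff)
          moreover have "{i} \<notin> J" using J iO by auto
          ultimately have "card S \<ge> 2" using J fJ by simp
          moreover have "S \<subseteq> P" using J PO by auto
          ultimately show ?thesis by (simp add: mergers_def)
        next
          assume "S \<in> A2" then show ?thesis using PO by (auto simp: A2_def mergers_def)
        qed
      qed
    qed
    have disj: "insert {i} ` Q \<inter> A2 = {}" using iO by (auto simp: A2_def)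
    define f where "f S = jump_prob P S * (if {i} \<in> S then g (card (\<Union>S)) else clade_exp g m (merge P S) i)" for S
    have "clade_exp g (Suc m) P i = (\<Sum>S\<in>mergers P. f S)" by (simp add: f_def)
    also have "\<dots> = (\<Sum>S\<in>insert {i} ` Q. f S) + (\<Sum>S\<in>A2. f S)"
      unfolding mer using fQ fA2 disj by (intro sum.union_disjoint) auto
    also have "(\<Sum>S\<in>insert {i} ` Q. f S) = (\<Sum>J\<in>Q. bs_rate (Suc r) (Suc (card J)) / real r * g (1 + sig J))"
    proof -
      have inj: "inj_on (insert {i}) Q"
      proof (rule inj_onI)
        fix x y assume x: "x \<in> Q" and y: "y \<in> Q" and e: "insert {i} x = insert {i} y"
        have "{i} \<notin> x" "{i} \<notin> y" using x y iO by (auto simp: Q_def)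
        then have "x = insert {i} x - {{i}}" "y = insert {i} y - {{i}}" by auto
        then show "x = y" using e by metis
      qed
      have "(\<Sum>S\<in>insert {i} ` Q. f S) = (\<Sum>J\<in>Q. f (insert {i} J))" by (rule sum.reindex[OF inj, unfolded comp_def])
      also have "\<dots> = (\<Sum>J\<in>Q. bs_rate (Suc r) (Suc (card J)) / real r * g (1 + sig J))"
      proof (rule sum.cong[OF refl])
        fix J assume "J \<in> Q"
        then have J: "J \<subseteq> Ob" "J \<noteq> {}" by (auto simp: Q_def)
        have fJ: "finite J" using J fOb finite_subset by blast
        have iJ: "{i} \<notin> J" using J iO by auto
        have c: "card (insert {i} J) = Suc (card J)" using fJ iJ by simp
        have "card (\<Union>(insert {i} J)) = sig (insert {i} J)"
          using J PO by (intro card_Union_good[OF G]) auto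
        also have "\<dots> = 1 + sig J" using fJ iJ by (simp add: sig_def)
        finally show "f (insert {i} J) = bs_rate (Suc r) (Suc (card J)) / real r * g (1 + sig J)"
          by (simp add: f_def jp c)
      qed
      finally show ?thesis .
    qed
    also have "(\<Sum>S\<in>A2. f S) = (\<Sum>S\<in>A2. \<Sum>J\<in>Q. bs_rate (Suc r) (card S) / real r *
        (if S \<subseteq> J then ww (r - card S + 1) (card J - card S + 1) * g (1 + sig J)
         else if S \<inter> J = {} then ww (r - card S + 1) (card J) * g (1 + sig J) else 0))"
    proof (rule sum.cong[OF refl])
      fix S assume "S \<in> A2"
      then have S: "S \<subseteq> P - {{i}}" "2 \<le> card S" by (auto simp: A2_def Ob_def)
      interpret ms: mrg_ctx P i S using G iP S by unfold_locales
      have iS: "{i} \<notin> S" using S by auto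
      have "card (merge P S) \<le> Suc m" using ms.merge_card cP S cPr by simp
      then have IH: "clade_exp g m (merge P S) i = (\<Sum>J\<in>{J. J \<subseteq> merge P S - {{i}} \<and> J \<noteq> {}}. ww (card (merge P S) - 1) (card J) * g (1 + sig J))"
        using Suc.IH[OF ms.merge_good ms.merge_i] by simp
      have "f S = bs_rate (Suc r) (card S) / real r * clade_exp g m (merge P S) i"
        by (simp add: f_def jp iS)
      also note IH
      also note ms.merge_sum
      also have "card P - 1 = r" using cPr by simp
      finally show "f S = (\<Sum>J\<in>Q. bs_rate (Suc r) (card S) / real r *
        (if S \<subseteq> J then ww (r - card S + 1) (card J - card S + 1) * g (1 + sig J)
         else if S \<inter> J = {} then ww (r - card S + 1) (card J) * g (1 + sig J) else 0))"
        by (simp add: sum_distrib_left Q_def Ob_def)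
    qed
    also have "\<dots> = (\<Sum>J\<in>Q. \<Sum>S\<in>A2. bs_rate (Suc r) (card S) / real r *
        (if S \<subseteq> J then ww (r - card S + 1) (card J - card S + 1) * g (1 + sig J)
         else if S \<inter> J = {} then ww (r - card S + 1) (card J) * g (1 + sig J) else 0))"
      by (rule sum.swap)
    also have "\<dots> = (\<Sum>J\<in>Q. g (1 + sig J) *
        ((\<Sum>s\<in>{2..card J}. real (card J choose s) * (bs_rate (Suc r) s / real r * ww (r - s + 1) (card J - s + 1)))
       + (\<Sum>s\<in>{2..r - card J}. real ((r - card J) choose s) * (bs_rate (Suc r) s / real r * ww (r - s + 1) (card J)))))"
    proof (rule sum.cong[OF refl])
      fix J assume "J \<in> Q"
      then have J: "J \<subseteq> Ob" by (auto simp: Q_def)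
      have "(\<Sum>S\<in>A2. bs_rate (Suc r) (card S) / real r *
        (if S \<subseteq> J then ww (r - card S + 1) (card J - card S + 1) * g (1 + sig J)
         else if S \<inter> J = {} then ww (r - card S + 1) (card J) * g (1 + sig J) else 0))
        = g (1 + sig J) * (\<Sum>S\<in>A2. (if S \<subseteq> J then (\<lambda>s. bs_rate (Suc r) s / real r * ww (r - s + 1) (card J - s + 1)) (card S)
           else if S \<inter> J = {} then (\<lambda>s. bs_rate (Suc r) s / real r * ww (r - s + 1) (card J)) (card S) else 0))"
        unfolding sum_distrib_left by (rule sum.cong[OF refl]) auto
      also have "\<dots> = g (1 + sig J) *
        ((\<Sum>s\<in>{2..card J}. real (card J choose s) * (bs_rate (Suc r) s / real r * ww (r - s + 1) (card J - s + 1)))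
       + (\<Sum>s\<in>{2..r - card J}. real ((r - card J) choose s) * (bs_rate (Suc r) s / real r * ww (r - s + 1) (card J))))"
        unfolding A2_def r_def
        using split_sum[OF fOb J, where X="\<lambda>s. bs_rate (Suc (card Ob)) s / real (card Ob) * ww (card Ob - s + 1) (card J - s + 1)"
            and Y="\<lambda>s. bs_rate (Suc (card Ob)) s / real (card Ob) * ww (card Ob - s + 1) (card J)"]
        by (simp only:)
      finally show "(\<Sum>S\<in>A2. bs_rate (Suc r) (card S) / real r *
        (if S \<subseteq> J then ww (r - card S + 1) (card J - card S + 1) * g (1 + sig J)
         else if S \<inter> J = {} then ww (r - card S + 1) (card J) * g (1 + sig J) else 0))
        = g (1 + sig J) *
        ((\<Sum>s\<in>{2..card J}. real (card J choose s) * (bs_rate (Suc r) s / real r * ww (r - s + 1) (card J - s + 1)))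
       + (\<Sum>s\<in>{2..r - card J}. real ((r - card J) choose s) * (bs_rate (Suc r) s / real r * ww (r - s + 1) (card J))))" .
    qed
    also have "(\<Sum>J\<in>Q. bs_rate (Suc r) (Suc (card J)) / real r * g (1 + sig J)) + \<dots>
        = (\<Sum>J\<in>Q. ww r (card J) * g (1 + sig J))"
      unfolding sum.distrib[symmetric]
    proof (rule sum.cong[OF refl])
      fix J assume "J \<in> Q"
      then have J: "J \<subseteq> Ob" "J \<noteq> {}" by (auto simp: Q_def)
      have fJ: "finite J" using J fOb finite_subset by blast
      have j1: "1 \<le> card J" using fJ J by (simp add: Suc_leI card_gt_0_iff)
      have jr: "card J \<le> r" using card_mono[OF fOb J(1)] by (simp add: r_def)
      show "bs_rate (Suc r) (Suc (card J)) / real r * g (1 + sig J) + g (1 + sig J) *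
        ((\<Sum>s\<in>{2..card J}. real (card J choose s) * (bs_rate (Suc r) s / real r * ww (r - s + 1) (card J - s + 1)))
       + (\<Sum>s\<in>{2..r - card J}. real ((r - card J) choose s) * (bs_rate (Suc r) s / real r * ww (r - s + 1) (card J))))
        = ww r (card J) * g (1 + sig J)"
      proof -
        have gen: "\<And>a B C w G :: real. a + B + C = w \<Longrightarrow> a * G + G * (B + C) = w * G"
        proof -
          fix a B C w G :: real assume h: "a + B + C = w"
          have "a * G + G * (B + C) = (a + B + C) * G" by (simp add: algebra_simps)
          then show "a * G + G * (B + C) = w * G" using h by simp
        qed
        show ?thesis by (rule gen[OF NUM[OF j1 jr]])
      qed
    qed
    finally show ?thesis using cPr by (simp add: Q_def Ob_def)
  qed
qed


lemma Cww: "1 \<le> s \<Longrightarrow> s \<le> r \<Longrightarrow> real (r choose s) * ww r s = aa (r - s) / real s"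
proof -
  assume s: "1 \<le> s" "s \<le> r"
  have C: "real (r choose s) = fact r / (fact s * fact (r - s))" using s by (simp add: binomial_fact)
  have fs: "(fact s :: real) = real s * fact (s - 1)" using s by (simp add: fact_reduce)
  have gen: "\<And>Fr S F1 Frs a :: real. Fr \<noteq> 0 \<Longrightarrow> S \<noteq> 0 \<Longrightarrow> F1 \<noteq> 0 \<Longrightarrow> Frs \<noteq> 0 \<Longrightarrow>
     Fr / (S * F1 * Frs) * (a * F1 * Frs / Fr) = a / S"
    by (simp add: field_simps)
  show ?thesis unfolding C ww_def fs by (rule gen) (use s in auto)
qed

lemma singl_good: "good (singletons n)"
  by (auto simp: good_def singletons_def)

lemma card_singl: "card (singletons n) = n"
proof -
  have "inj_on (\<lambda>j. {j}) {1..n}" by (auto simp: inj_on_def)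
  then show ?thesis by (simp add: singletons_def card_image)
qed

lemma clade_singl:
  assumes i: "i \<in> {1..n}"
  shows "clade_exp g n (singletons n) i = (\<Sum>s\<in>{1..<n}. aa (n - 1 - s) / real s * g (1 + s))"
proof -
  define Ob where "Ob = singletons n - {{i}}"
  have iP: "{i} \<in> singletons n" using i by (simp add: singletons_def)
  have fOb: "finite Ob" by (simp add: Ob_def singletons_def)
  have cO: "card Ob = n - 1" using iP by (simp add: Ob_def card_singl)
  have sigJ: "\<And>J. J \<subseteq> Ob \<Longrightarrow> sig J = card J"
  proof -
    fix J assume "J \<subseteq> Ob"
    then have "\<forall>B\<in>J. card B = 1" by (auto simp: Ob_def singletons_def)
    then show "sig J = card J" by (simp add: sig_def)
  qed
  have "clade_exp g n (singletons n) i = (\<Sum>J\<in>{J. J \<subseteq> Ob \<and> J \<noteq> {}}. ww (card (singletons n) - 1) (card J) * g (1 + sig J))"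
    unfolding Ob_def by (rule main_part[OF singl_good iP]) (simp add: card_singl)
  also have "\<dots> = (\<Sum>J\<in>{J. J \<subseteq> Ob \<and> 1 \<le> card J}. (\<lambda>s. ww (n - 1) s * g (1 + s)) (card J))"
  proof -
    have "{J. J \<subseteq> Ob \<and> J \<noteq> {}} = {J. J \<subseteq> Ob \<and> 1 \<le> card J}"
      using fOb by (auto simp: Suc_le_eq card_gt_0_iff dest: finite_subset)
    then show ?thesis by (auto simp: card_singl sigJ intro!: sum.cong)
  qed
  also have "\<dots> = (\<Sum>s\<in>{s. s \<le> card Ob \<and> 1 \<le> s}. real (card Ob choose s) * (ww (n - 1) s * g (1 + s)))"
    by (rule group_card[OF fOb])
  also have "{s. s \<le> card Ob \<and> 1 \<le> s} = {1..<n}" using cO i by auto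
  also have "(\<Sum>s\<in>{1..<n}. real (card Ob choose s) * (ww (n - 1) s * g (1 + s))) = (\<Sum>s\<in>{1..<n}. aa (n - 1 - s) / real s * g (1 + s))"
  proof (rule sum.cong[OF refl])
    fix s assume "s \<in> {1..<n}"
    then have s: "1 \<le> s" "s \<le> n - 1" by auto
    show "real (card Ob choose s) * (ww (n - 1) s * g (1 + s)) = aa (n - 1 - s) / real s * g (1 + s)"
      using Cww[OF s] cO by (simp add: mult.assoc[symmetric])
  qed
  finally show ?thesis .
qed

lemma min_clade_TT: "n \<ge> 1 \<Longrightarrow> min_clade_exp n (\<lambda>x. real x ^ k) = TT k n"
proof -
  assume n: "n \<ge> 1"
  have "\<And>i. i \<in> {1..n} \<Longrightarrow> clade_exp (\<lambda>x. real x ^ k) n (singletons n) i = TT k n"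
    unfolding TT_def by (subst clade_singl) (auto intro!: sum.cong simp: add.commute)
  then have "(\<Sum>i\<in>{1..n}. clade_exp (\<lambda>x. real x ^ k) n (singletons n) i) = real n * TT k n" by simp
  then show ?thesis using n by (simp add: min_clade_exp_def)
qed

theorem theorem2p5:
  fixes k :: nat
  assumes "k \<ge> 1"
  shows "(\<lambda>n::nat. ln (real n) / real n ^ k * min_clade_exp n (\<lambda>x. real x ^ k))
           \<longlonglongrightarrow> 1 / real k"
proof -
  obtain q where q: "k = Suc q" using assms by (metis Suc_le_D One_nat_def)
  have ev: "\<forall>\<^sub>F n in sequentially. ln (real n) / real n ^ k * TT k n = ln (real n) / real n ^ k * min_clade_exp n (\<lambda>x. real x ^ k)"
    using eventually_ge_at_top[of 1] by eventually_elim (simp add: min_clade_TT)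
  show ?thesis using tendsto_cong[OF ev] main_lim[of q] q by simp
qed


end
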